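(* For $n\ge 3$ and $r>0$, let $T_n(r)$ be a regular $n$-gon centered at the origin whose vertices lie at distance $r$ from the origin. Then $P_{\gamma_2}(T_n(r))<\sqrt{2/\pi}$ for every $r>0$ and every $n\ge 3$.
   Context: For a convex set $\Omega\subset\mathbb{R}^2$, its Gaussian perimeter is $P_{\gamma_2}(\Omega)=\frac{1}{2\pi}\int_{\partial\Omega}\exp\left(-\frac{|\mathbf{x}|^2}{2}\right)d\mathcal{H}^1(\mathbf{x})$, where $\mathcal{H}^1$ is the one-dimensional Hausdorff measure. *)

theory Defs
  imports "HOL-Analysis.Analysis"
begin

text \<open>One-dimensional Hausdorff (outer) measure on the plane, via the
  Caratheodory construction with countable covers and the normalisation
  under which H^1 of a segment is its length.\<close>

definition hausdorff1_approx :: "real \<Rightarrow> (real^2) set \<Rightarrow> ennreal" where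
  "hausdorff1_approx \<delta> A =
     (INF C \<in> {C :: nat \<Rightarrow> (real^2) set. A \<subseteq> (\<Union>i. C i) \<and> (\<forall>i. bounded (C i) \<and> diameter (C i) \<le> \<delta>)}.
        (\<Sum>i. ennreal (diameter (C i))))"

definition hausdorff1 :: "(real^2) set \<Rightarrow> ennreal" where
  "hausdorff1 A = (SUP \<delta> \<in> {0<..}. hausdorff1_approx \<delta> A)"

definition H1 :: "(real^2) measure" where
  "H1 = measure_of UNIV (sets borel) hausdorff1"

definition gaussian_perimeter :: "(real^2) set \<Rightarrow> ennreal" where
  "gaussian_perimeter \<Omega> =
     ennreal (1 / (2 * pi)) *
       (\<integral>\<^sup>+ x \<in> frontier \<Omega>. ennreal (exp (- (norm x)\<^sup>2 / 2)) \<partial>H1)"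

definition regular_polygon :: "nat \<Rightarrow> real \<Rightarrow> real \<Rightarrow> (real^2) set" where
  "regular_polygon n r \<theta> =
     convex hull {vector [r * cos (\<theta> + 2 * pi * real k / real n),
                          r * sin (\<theta> + 2 * pi * real k / real n)] | k. k < n}"

end

theory Submission
  imports Defs
begin


lemma inner2: "(x::real^2) \<bullet> y = x$1*y$1 + x$2*y$2"
  by (simp add: inner_vec_def sum_2)

lemma norm2: "(norm (x::real^2))^2 = (x$1)^2 + (x$2)^2"
  using power2_norm_eq_inner[of x] by (simp add: inner2 power2_eq_square)

lemma cos_per: "cos ((x::real) + 2*pi* of_int (m::int)) = cos x"
  by (simp add: cos_add)
lemma sin_per: "sin ((x::real) + 2*pi* of_int (m::int)) = sin x"
  by (simp add: sin_add)

lemma orth2: "(norm (z::real^2))^2 = (vector[cos b, sin b] \<bullet> z)^2 + (vector[- sin b, cos b] \<bullet> z)^2"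
proof -
  have "(cos b * z$1 + sin b * z$2)^2 + (- sin b * z$1 + cos b * z$2)^2
     = ((cos b)^2 + (sin b)^2) * ((z$1)^2 + (z$2)^2)" by algebra
  then show ?thesis by (simp add: norm2 inner2)
qed

lemma orth2': "(norm (z::real^2))^2 = (vector[cos b, sin b] \<bullet> z)^2 + ((- vector[- sin b, cos b]) \<bullet> z)^2"
  using orth2[of z b] by simp

lemma odd_cos:
  fixes m :: int and n :: nat
  assumes "n \<ge> 1"
  shows "cos ((2* of_int m+1)*pi/n) \<le> cos (pi/n)"
proof -
  define l where "l = (2*m+1+int n) div (2*int n)"
  define \<rho> where "\<rho> = (2*m+1+int n) mod (2*int n)"
  have np: "int n > 0" using assms by simp
  have r0: "0 \<le> \<rho>" "\<rho> < 2*int n" unfolding \<rho>_def using np by auto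
  have dm: "2*m+1+int n = 2*int n*l + \<rho>" unfolding l_def \<rho>_def by simp
  define q where "q = \<rho> - int n"
  have qeq: "2*m+1 = 2*int n*l + q" using dm q_def by simp
  define t where "t = int n * l"
  have "2*m+1 = 2*t + q" using qeq t_def by simp
  then have q0: "q \<noteq> 0" by presburger
  have qb: "\<bar>q\<bar> \<le> int n" using r0 q_def by auto
  have q1: "1 \<le> \<bar>q\<bar>" using q0 by simp
  have "(2* of_int m+1)*pi/n = of_int q*pi/n + 2*pi* of_int l"
  proof -
    have "(2* of_int m+1::real) = 2*real n* of_int l + of_int q"
      using arg_cong[OF qeq, of real_of_int] by simp
    then show ?thesis using assms by (simp add: field_simps)
  qed
  then have "cos ((2* of_int m+1)*pi/n) = cos (of_int q*pi/n)" by (simp add: cos_per)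
  also have "\<dots> = cos (\<bar>of_int q\<bar>*pi/n)"
    by (cases "q \<ge> 0") (auto simp: minus_divide_left[symmetric])
  also have "\<dots> \<le> cos (pi/n)"
  proof (rule cos_monotone_0_pi_le)
    show "0 \<le> pi / real n" by simp
    have "(1::real) \<le> \<bar>of_int q\<bar>" using q1 by linarith
    then show "pi / real n \<le> \<bar>real_of_int q\<bar> * pi / real n"
      by (simp add: divide_right_mono)
    have "\<bar>real_of_int q\<bar> \<le> real n" using qb by linarith
    then have "\<bar>real_of_int q\<bar> * pi \<le> real n * pi" by (simp add: mult_right_mono)
    then show "\<bar>real_of_int q\<bar> * pi / real n \<le> pi" using assms by (simp add: divide_le_eq)
  qed
  finally show ?thesis .
qed

lemma key_exp:
  fixes a r :: real
  assumes "a > 0" "r \<ge> 0"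
  shows "r * exp (- (a * r^2)) \<le> 1 / sqrt (2 * exp 1 * a)"
proof -
  define y where "y = 2*a*r^2"
  have "1 + (y - 1) \<le> exp (y - 1)" by (rule exp_ge_add_one_self)
  then have "y \<le> exp y / exp 1" by (simp add: exp_diff)
  then have h: "exp 1 * y \<le> exp y" by (simp add: field_simps)
  have "(r * exp (- (a * r^2)))^2 = r^2 / exp y"
    by (simp add: y_def power_mult_distrib exp_minus field_simps power2_eq_square flip: exp_add)
  also have "\<dots> \<le> 1 / (2*exp 1*a)"
  proof -
    have e: "r^2 * (2*exp 1*a) = exp 1 * y" by (simp add: y_def)
    have p: "0 < 2*exp 1*a" using assms by simp
    have "r^2 * (2*exp 1*a) \<le> exp y" using e h by linarith
    then have "r^2 \<le> exp y / (2*exp 1*a)" using p by (simp add: le_divide_eq)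
    then show ?thesis using p by (simp add: divide_le_eq field_simps)
  qed
  also have "\<dots> = (1 / sqrt (2 * exp 1 * a))^2"
    using assms by (simp add: power_divide)
  finally show ?thesis
    by (rule power2_le_imp_le) (use assms in simp)
qed



definition bet :: "real \<Rightarrow> nat \<Rightarrow> int \<Rightarrow> real" where
  "bet \<theta> n k = \<theta> + (2 * of_int k + 1) * pi / n"
definition alp :: "real \<Rightarrow> nat \<Rightarrow> int \<Rightarrow> real" where
  "alp \<theta> n k = \<theta> + 2 * pi * of_int k / n"
definition nrm :: "real \<Rightarrow> nat \<Rightarrow> int \<Rightarrow> real^2" where
  "nrm \<theta> n k = vector [cos (bet \<theta> n k), sin (bet \<theta> n k)]"
definition tng :: "real \<Rightarrow> nat \<Rightarrow> int \<Rightarrow> real^2" where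
  "tng \<theta> n k = vector [- sin (bet \<theta> n k), cos (bet \<theta> n k)]"
definition vtx :: "real \<Rightarrow> real \<Rightarrow> nat \<Rightarrow> int \<Rightarrow> real^2" where
  "vtx r \<theta> n k = vector [r * cos (alp \<theta> n k), r * sin (alp \<theta> n k)]"

lemma int_decomp: "real_of_int k = real n * of_int (k div int n) + of_int (k mod int n)"
proof -
  have "k = int n * (k div int n) + k mod int n" by simp
  then show ?thesis by (metis of_int_add of_int_mult of_int_of_nat_eq)
qed

lemma bet_mod: "n > 0 \<Longrightarrow> bet \<theta> n k = bet \<theta> n (k mod int n) + 2 * pi * of_int (k div int n)"
  unfolding bet_def by (subst int_decomp[of k n]) (simp add: field_simps)

lemma alp_mod: "n > 0 \<Longrightarrow> alp \<theta> n k = alp \<theta> n (k mod int n) + 2 * pi * of_int (k div int n)"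
  unfolding alp_def by (subst int_decomp[of k n]) (simp add: field_simps)

lemma nrm_mod: "n > 0 \<Longrightarrow> nrm \<theta> n k = nrm \<theta> n (k mod int n)"
proof -
  assume n: "n > 0"
  have e: "bet \<theta> n k = bet \<theta> n (k mod int n) + 2 * pi * of_int (k div int n)" by (rule bet_mod[OF n])
  show ?thesis by (simp only: nrm_def e cos_per sin_per)
qed
lemma tng_mod: "n > 0 \<Longrightarrow> tng \<theta> n k = tng \<theta> n (k mod int n)"
proof -
  assume n: "n > 0"
  have e: "bet \<theta> n k = bet \<theta> n (k mod int n) + 2 * pi * of_int (k div int n)" by (rule bet_mod[OF n])
  show ?thesis by (simp only: tng_def e cos_per sin_per)
qed
lemma vtx_mod: "n > 0 \<Longrightarrow> vtx r \<theta> n k = vtx r \<theta> n (k mod int n)"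
proof -
  assume n: "n > 0"
  have e: "alp \<theta> n k = alp \<theta> n (k mod int n) + 2 * pi * of_int (k div int n)" by (rule alp_mod[OF n])
  show ?thesis by (simp only: vtx_def e cos_per sin_per)
qed

lemma polygon_eq: "regular_polygon n r \<theta> = convex hull (vtx r \<theta> n ` {0..<int n})"
proof -
  have "{vector [r * cos (\<theta> + 2 * pi * real k / real n), r * sin (\<theta> + 2 * pi * real k / real n)] | k. k < n}
        = vtx r \<theta> n ` {0..<int n}" (is "?L = ?R")
  proof
    show "?L \<subseteq> ?R"
    proof
      fix y assume "y \<in> ?L"
      then obtain k where k: "k < n" "y = vector [r * cos (\<theta> + 2 * pi * real k / real n), r * sin (\<theta> + 2 * pi * real k / real n)]" by blast
      then have "y = vtx r \<theta> n (int k)" by (simp add: vtx_def alp_def)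
      moreover have "int k \<in> {0..<int n}" using k by simp
      ultimately show "y \<in> ?R" by blast
    qed
    show "?R \<subseteq> ?L"
    proof
      fix y assume "y \<in> ?R"
      then obtain k where k: "k \<in> {0..<int n}" "y = vtx r \<theta> n k" by blast
      then have "y = vector [r * cos (\<theta> + 2 * pi * real (nat k) / real n), r * sin (\<theta> + 2 * pi * real (nat k) / real n)]"
        by (simp add: vtx_def alp_def)
      moreover have "nat k < n" using k by auto
      ultimately show "y \<in> ?L" by blast
    qed
  qed
  then show ?thesis unfolding regular_polygon_def by simp
qed

lemma vtx_in: "n > 0 \<Longrightarrow> vtx r \<theta> n k \<in> regular_polygon n r \<theta>"
  unfolding polygon_eq
  by (subst vtx_mod) (auto intro!: hull_inc)

lemma vtx_norm: "r \<ge> 0 \<Longrightarrow> norm (vtx r \<theta> n k) = r"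
proof -
  assume r: "r \<ge> 0"
  have "(norm (vtx r \<theta> n k))^2 = r^2"
    by (simp add: norm2 vtx_def power_mult_distrib flip: distrib_left)
  then show ?thesis using r by (simp add: power2_eq_iff_nonneg)
qed

lemma P_cball: assumes "r \<ge> 0" "y \<in> regular_polygon n r \<theta>" shows "norm y \<le> r"
proof -
  have "regular_polygon n r \<theta> \<subseteq> cball 0 r"
    unfolding polygon_eq
    by (rule hull_minimal) (auto simp: vtx_norm assms)
  then show ?thesis using assms by auto
qed

lemma nrm_vtx: "nrm \<theta> n k \<bullet> vtx r \<theta> n j = r * cos (bet \<theta> n k - alp \<theta> n j)"
  by (simp add: nrm_def vtx_def inner2 cos_diff algebra_simps)

lemma P_half:
  assumes "n \<ge> 1" "y \<in> regular_polygon n r \<theta>" "r \<ge> 0"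
  shows "nrm \<theta> n k \<bullet> y \<le> r * cos (pi / n)"
proof -
  have "regular_polygon n r \<theta> \<subseteq> {y. nrm \<theta> n k \<bullet> y \<le> r * cos (pi / n)}"
    unfolding polygon_eq
  proof (rule hull_minimal)
    show "convex {y. nrm \<theta> n k \<bullet> y \<le> r * cos (pi / real n)}" by (rule convex_halfspace_le)
    show "vtx r \<theta> n ` {0..<int n} \<subseteq> {y. nrm \<theta> n k \<bullet> y \<le> r * cos (pi / real n)}"
    proof
      fix y assume "y \<in> vtx r \<theta> n ` {0..<int n}"
      then obtain j where y: "y = vtx r \<theta> n j" by blast
      have e: "bet \<theta> n k - alp \<theta> n j = (2 * of_int (k - j) + 1) * pi / n"
        using assms(1) by (simp add: bet_def alp_def field_simps)
      have "cos (bet \<theta> n k - alp \<theta> n j) \<le> cos (pi / n)" unfolding e by (rule odd_cos[OF assms(1)])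
      then show "y \<in> {y. nrm \<theta> n k \<bullet> y \<le> r * cos (pi / real n)}"
        using y nrm_vtx mult_left_mono[OF _ assms(3)] by auto
    qed
  qed
  then show ?thesis using assms by auto
qed



lemma support:
  fixes S :: "(real^2) set"
  assumes "convex S" "closed S" "x \<in> frontier S"
  shows "\<exists>a. a \<noteq> 0 \<and> (\<forall>y\<in>S. a \<bullet> y \<le> a \<bullet> x)"
proof (cases "aff_dim S = int DIM(real^2)")
  case True
  have xc: "x \<in> closure S" and xi: "x \<notin> interior S" using assms(3) by (simp_all add: frontier_def)
  have "interior S = rel_interior S" using True interior_rel_interior_gen[of S] by presburger
  then have xr: "x \<notin> rel_interior S" using xi by simp
  obtain a where a: "a \<noteq> 0" "\<And>y. y \<in> closure S \<Longrightarrow> a \<bullet> x \<le> a \<bullet> y"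
     "\<And>y. y \<in> rel_interior S \<Longrightarrow> a \<bullet> x < a \<bullet> y"
    by (rule supporting_hyperplane_relative_frontier[OF assms(1) xc xr]) blast
  show ?thesis
  proof (intro exI conjI ballI)
    show "- a \<noteq> 0" using a by simp
    fix y assume "y \<in> S"
    then have "a \<bullet> x \<le> a \<bullet> y" using a closure_subset by blast
    then show "- a \<bullet> y \<le> - a \<bullet> x" by simp
  qed
next
  case False
  then have "aff_dim S < int DIM(real^2)" using aff_dim_le_DIM[of S] by linarith
  then obtain a b where a: "a \<noteq> 0" "S \<subseteq> {x. a \<bullet> x = b}" by (rule aff_lowdim_subset_hyperplane)
  have "x \<in> closure S" using assms(3) by (simp add: frontier_def)
  then have "x \<in> S" using assms(2) by (simp add: closure_closed)
  then have xS: "x \<in> S" .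
  have hb: "\<And>y. y \<in> S \<Longrightarrow> a \<bullet> y = b" using a(2) by blast
  show ?thesis using a(1) hb[OF xS] hb by (intro exI[of _ a]) auto
qed



lemma trig_id1: "sin (b' - f) * cos b + sin (f - b) * cos b' = sin (b' - b) * cos (f::real)"
  by (simp add: sin_diff algebra_simps)
lemma trig_id2: "sin (b' - f) * sin b + sin (f - b) * sin b' = sin (b' - b) * sin (f::real)"
  by (simp add: sin_diff algebra_simps)

lemma cone:
  fixes a :: "real^2"
  assumes "a \<noteq> 0" "n \<ge> 3"
  shows "\<exists>k A B. A \<ge> 0 \<and> B \<ge> 0 \<and> a = A *\<^sub>R nrm \<theta> n k + B *\<^sub>R nrm \<theta> n (k+1)"
proof -
  define \<rho> where "\<rho> = norm a"
  have \<rho>: "\<rho> > 0" using assms by (simp add: \<rho>_def)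
  have sq: "(a$1)^2 + (a$2)^2 = \<rho>^2" using norm2[of a] by (simp add: \<rho>_def)
  have "(a$1/\<rho>)^2 + (a$2/\<rho>)^2 = ((a$1)^2 + (a$2)^2) / \<rho>^2"
    by (simp add: power_divide add_divide_distrib)
  then have "(a$1/\<rho>)^2 + (a$2/\<rho>)^2 = 1" using sq \<rho> by simp
  then obtain f where f: "a$1/\<rho> = cos f" "a$2/\<rho> = sin f" by (rule sincos_total_2pi)
  have a1: "a$1 = \<rho> * cos f" and a2: "a$2 = \<rho> * sin f" using f \<rho> by (auto simp: field_simps)
  have np: "real n > 0" using assms by simp
  define k where "k = \<lfloor>(f - \<theta> - pi/n) * n / (2*pi)\<rfloor>"
  have h1: "of_int k \<le> (f - \<theta> - pi/n) * n / (2*pi)" unfolding k_def by (rule of_int_floor_le)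
  have h2: "(f - \<theta> - pi/n) * n / (2*pi) < of_int k + 1" unfolding k_def by (rule real_of_int_floor_add_one_gt)
  define b where "b = bet \<theta> n k"
  define b' where "b' = bet \<theta> n (k+1)"
  have bb: "b' - b = 2*pi/n" using np by (simp add: b_def b'_def bet_def field_simps)
  have "of_int k * (2*pi/n) \<le> ((f - \<theta> - pi/n) * n / (2*pi)) * (2*pi/n)"
    using h1 by (rule mult_right_mono) simp
  also have "\<dots> = f - \<theta> - pi/n" using np by (simp add: field_simps)
  finally have "of_int k * (2*pi/n) \<le> f - \<theta> - pi/n" .
  moreover have bexp: "b = \<theta> + pi/n + of_int k * (2*pi/n)" using np by (simp add: b_def bet_def field_simps)
  ultimately have d1: "0 \<le> f - b" by linarith
  have "f - \<theta> - pi/n = ((f - \<theta> - pi/n) * n / (2*pi)) * (2*pi/n)" using np by (simp add: field_simps)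
  also have "\<dots> < (of_int k + 1) * (2*pi/n)"
    using h2 by (rule mult_strict_right_mono) (use np in simp)
  finally have "f - \<theta> - pi/n < (of_int k + 1) * (2*pi/n)" .
  moreover have bexp': "b' = \<theta> + pi/n + (of_int k + 1) * (2*pi/n)" using np by (simp add: b'_def bet_def field_simps)
  ultimately have d2: "0 \<le> b' - f" by linarith
  have pin: "2*pi/n \<le> pi" using assms by (simp add: divide_le_eq)
  have pin': "2*pi/n < pi" using assms by (simp add: divide_less_eq)
  have s1: "sin (f - b) \<ge> 0" using d1 d2 bb pin by (intro sin_ge_zero) auto
  have s2: "sin (b' - f) \<ge> 0" using d1 d2 bb pin by (intro sin_ge_zero) auto
  have s0: "sin (b' - b) > 0" using bb pin' np by (simp add: sin_gt_zero)
  define A where "A = \<rho> * sin (b' - f) / sin (b' - b)"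
  define B where "B = \<rho> * sin (f - b) / sin (b' - b)"
  have A0: "A \<ge> 0" using s2 s0 \<rho> by (simp add: A_def)
  have B0: "B \<ge> 0" using s1 s0 \<rho> by (simp add: B_def)
  have e1: "A * cos b + B * cos b' = \<rho> * cos f"
  proof -
    have "A * cos b + B * cos b' = \<rho> * (sin (b' - f) * cos b + sin (f - b) * cos b') / sin (b' - b)"
      using s0 by (simp add: A_def B_def field_simps less_imp_neq[symmetric])
    also have "\<dots> = \<rho> * cos f" using trig_id1[of b' f b] s0 by simp
    finally show ?thesis .
  qed
  have e2: "A * sin b + B * sin b' = \<rho> * sin f"
  proof -
    have "A * sin b + B * sin b' = \<rho> * (sin (b' - f) * sin b + sin (f - b) * sin b') / sin (b' - b)"
      using s0 by (simp add: A_def B_def field_simps less_imp_neq[symmetric])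
    also have "\<dots> = \<rho> * sin f" using trig_id2[of b' f b] s0 by simp
    finally show ?thesis .
  qed
  have "a = A *\<^sub>R nrm \<theta> n k + B *\<^sub>R nrm \<theta> n (k+1)"
    unfolding vec_eq_iff forall_2 using e1 e2 a1 a2
    by (simp add: nrm_def b_def b'_def)
  then show ?thesis using A0 B0 by blast
qed



lemma polygon_compact: "compact (regular_polygon n r \<theta>)"
  unfolding polygon_eq by (intro compact_convex_hull finite_imp_compact) simp

lemma frontier_chord:
  assumes n3: "n \<ge> 3" and r: "r > 0" and x: "x \<in> frontier (regular_polygon n r \<theta>)"
  shows "\<exists>k\<in>{0..<int n}. nrm \<theta> n k \<bullet> x = r * cos (pi / n) \<and> \<bar>tng \<theta> n k \<bullet> x\<bar> \<le> r * sin (pi / n)"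
proof -
  let ?P = "regular_polygon n r \<theta>"
  define d where "d = r * cos (pi / n)"
  have n0: "n > 0" "n \<ge> 1" using n3 by auto
  have cvx: "convex ?P" unfolding polygon_eq by (rule convex_convex_hull)
  have cl: "closed ?P" using polygon_compact by (rule compact_imp_closed)
  have "x \<in> closure ?P" using x by (simp add: frontier_def)
  then have xP: "x \<in> ?P" using cl by (simp add: closure_closed)
  obtain a where a: "a \<noteq> 0" "\<forall>y\<in>?P. a \<bullet> y \<le> a \<bullet> x" using support[OF cvx cl x] by blast
  obtain k A B where AB: "A \<ge> 0" "B \<ge> 0" "a = A *\<^sub>R nrm \<theta> n k + B *\<^sub>R nrm \<theta> n (k+1)"
    using cone[OF a(1) n3] by blast
  define v where "v = vtx r \<theta> n (k+1)"
  have vP: "v \<in> ?P" unfolding v_def by (rule vtx_in[OF n0(1)])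
  have e1: "bet \<theta> n k - alp \<theta> n (k+1) = - (pi / n)" using n0 by (simp add: bet_def alp_def field_simps)
  have e2: "bet \<theta> n (k+1) - alp \<theta> n (k+1) = pi / n" using n0 by (simp add: bet_def alp_def field_simps)
  have nv1: "nrm \<theta> n k \<bullet> v = d" unfolding v_def nrm_vtx e1 d_def by simp
  have nv2: "nrm \<theta> n (k+1) \<bullet> v = d" unfolding v_def nrm_vtx e2 d_def by simp
  have av: "a \<bullet> v = A * d + B * d" using AB(3) nv1 nv2 by (simp add: inner_add_left)
  have ax: "a \<bullet> x = A * (nrm \<theta> n k \<bullet> x) + B * (nrm \<theta> n (k+1) \<bullet> x)" using AB(3) by (simp add: inner_add_left)
  have p1: "nrm \<theta> n k \<bullet> x \<le> d" unfolding d_def using P_half[OF n0(2) xP] r by simp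
  have p2: "nrm \<theta> n (k+1) \<bullet> x \<le> d" unfolding d_def using P_half[OF n0(2) xP] r by simp
  have "a \<bullet> v \<le> a \<bullet> x" using a(2) vP by blast
  then have le0: "A * (d - nrm \<theta> n k \<bullet> x) + B * (d - nrm \<theta> n (k+1) \<bullet> x) \<le> 0"
    using av ax by (simp add: algebra_simps)
  have t1: "A * (d - nrm \<theta> n k \<bullet> x) \<ge> 0" using AB(1) p1 by simp
  have t2: "B * (d - nrm \<theta> n (k+1) \<bullet> x) \<ge> 0" using AB(2) p2 by simp
  have z1: "A * (d - nrm \<theta> n k \<bullet> x) = 0" using le0 t1 t2 by linarith
  have z2: "B * (d - nrm \<theta> n (k+1) \<bullet> x) = 0" using le0 t1 t2 by linarith
  obtain k' where k': "nrm \<theta> n k' \<bullet> x = d"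
  proof (cases "A = 0")
    case True
    then have "B \<noteq> 0" using AB(3) a(1) by auto
    then have "nrm \<theta> n (k+1) \<bullet> x = d" using z2 by simp
    then show ?thesis by (rule that)
  next
    case False
    then have "nrm \<theta> n k \<bullet> x = d" using z1 by simp
    then show ?thesis by (rule that)
  qed
  define k'' where "k'' = k' mod int n"
  have kr: "k'' \<in> {0..<int n}" unfolding k''_def using n0 by simp
  have nk: "nrm \<theta> n k'' = nrm \<theta> n k'" unfolding k''_def using nrm_mod[OF n0(1)] by simp
  have tk: "tng \<theta> n k'' = tng \<theta> n k'" unfolding k''_def using tng_mod[OF n0(1)] by simp
  have nx: "norm x \<le> r" using P_cball[OF _ xP] r by simp
  have o: "(norm x)^2 = (nrm \<theta> n k' \<bullet> x)^2 + (tng \<theta> n k' \<bullet> x)^2"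
    unfolding nrm_def tng_def by (rule orth2)
  have "(norm x)^2 \<le> r^2" using nx by (simp add: power_mono)
  then have "(tng \<theta> n k' \<bullet> x)^2 \<le> r^2 - d^2" using o k' by simp
  also have "\<dots> = (r * sin (pi / n))^2"
    by (simp add: d_def power_mult_distrib sin_squared_eq algebra_simps)
  finally have "(tng \<theta> n k' \<bullet> x)^2 \<le> (r * sin (pi / n))^2" .
  moreover have "r * sin (pi / n) \<ge> 0"
    using r n0 by (intro mult_nonneg_nonneg sin_ge_zero) (auto simp: divide_le_eq)
  ultimately have "\<bar>tng \<theta> n k' \<bullet> x\<bar> \<le> r * sin (pi / n)"
    using abs_le_square_iff[of "tng \<theta> n k' \<bullet> x" "r * sin (pi / n)"] by simp
  then show ?thesis using kr nk tk k' d_def by metis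
qed



lemma grid:
  fixes s L :: real and N :: nat
  assumes N: "N > 0" and s: "0 \<le> s" "s \<le> L"
  shows "\<exists>i<N. real i * L / N \<le> s \<and> s \<le> (real i + 1) * L / N"
proof (cases "s = L")
  case True
  have Np: "real N > 0" using N by simp
  have e: "real (N - 1) + 1 = real N" using N by (simp add: of_nat_diff)
  have "real (N - 1) * L \<le> real N * L" using s by (intro mult_right_mono) auto
  then have "real (N - 1) * L / N \<le> L" using Np by (simp add: pos_divide_le_eq mult.commute)
  moreover have "(real (N - 1) + 1) * L / N = L" using Np e by simp
  ultimately show ?thesis using True N by (intro exI[of _ "N - 1"]) auto
next
  case False
  then have sl: "s < L" using s by simp
  then have L: "L > 0" using s by simp
  have Np: "real N > 0" using N by simp
  define q where "q = s * N / L"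
  have q0: "q \<ge> 0" using s L by (simp add: q_def)
  have qN: "q < N" using sl L Np by (simp add: q_def pos_divide_less_eq)
  define i where "i = nat \<lfloor>q\<rfloor>"
  have ri: "real i = of_int \<lfloor>q\<rfloor>" using q0 by (simp add: i_def)
  have i1: "real i \<le> q" using ri by simp
  have i2: "q < real i + 1" using ri by linarith
  have iN: "i < N" using i1 qN by linarith
  have "real i * L \<le> s * N" using i1 L by (simp add: q_def pos_le_divide_eq)
  then have a1: "real i * L / N \<le> s" using Np by (simp add: pos_divide_le_eq)
  have "s * N < (real i + 1) * L" using i2 L by (simp add: q_def pos_divide_less_eq)
  then have a2: "s < (real i + 1) * L / N" using Np by (simp add: pos_less_divide_eq)
  show ?thesis using iN a1 a2 by (intro exI[of _ i]) auto
qed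

lemma hausdorff1_le:
  assumes L: "L \<ge> 0"
    and cov: "\<And>N::nat. N > 0 \<Longrightarrow> \<exists>C::nat \<Rightarrow> (real^2) set. A \<subseteq> (\<Union>i\<in>{..<N}. C i) \<and> (\<forall>i. bounded (C i) \<and> diameter (C i) \<le> L / real N)"
  shows "hausdorff1 A \<le> ennreal L"
  unfolding hausdorff1_def
proof (rule SUP_least)
  fix \<delta> :: real assume "\<delta> \<in> {0<..}"
  then have dp: "\<delta> > 0" by simp
  obtain N0 :: nat where N0: "L / \<delta> < N0" using reals_Archimedean2 by blast
  define N where "N = Suc N0"
  have Np: "N > 0" "real N > 0" by (auto simp: N_def)
  have "L / \<delta> < N" using N0 by (simp add: N_def)
  then have "L < N * \<delta>" using dp by (simp add: pos_divide_less_eq)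
  then have LN: "L / N \<le> \<delta>" using Np by (simp add: pos_divide_le_eq mult.commute)
  obtain C :: "nat \<Rightarrow> (real^2) set" where C: "A \<subseteq> (\<Union>i\<in>{..<N}. C i)" "\<forall>i. bounded (C i) \<and> diameter (C i) \<le> L / real N"
    using cov[OF Np(1)] by blast
  define C' where "C' i = (if i < N then C i else {})" for i
  have mem: "C' \<in> {C :: nat \<Rightarrow> (real^2) set. A \<subseteq> (\<Union>i. C i) \<and> (\<forall>i. bounded (C i) \<and> diameter (C i) \<le> \<delta>)}"
  proof (intro CollectI conjI allI)
    show "A \<subseteq> (\<Union>i. C' i)" using C(1) by (auto simp: C'_def)
    fix i show "bounded (C' i)" using C(2) by (simp add: C'_def)
    show "diameter (C' i) \<le> \<delta>" using C(2) LN dp by (auto simp: C'_def intro: order_trans)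
  qed
  have "hausdorff1_approx \<delta> A \<le> (\<Sum>i. ennreal (diameter (C' i)))"
    unfolding hausdorff1_approx_def using mem by (rule INF_lower)
  also have "\<dots> = (\<Sum>i<N. ennreal (diameter (C' i)))"
    by (rule suminf_finite) (auto simp: C'_def)
  also have "\<dots> \<le> (\<Sum>i<N. ennreal (L / N))"
    using C(2) by (intro sum_mono ennreal_leI) (simp add: C'_def)
  also have "\<dots> = ennreal L"
  proof -
    have "(\<Sum>i<N. ennreal (L / N)) = ennreal (\<Sum>i<N. L / N)"
      using L by (subst sum_ennreal) auto
    also have "(\<Sum>i<N. L / N) = L" using Np by simp
    finally show ?thesis .
  qed
  finally show "hausdorff1_approx \<delta> A \<le> ennreal L" .
qed

lemma hausdorff1_strip:
  fixes u w :: "real^2"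
  assumes orth: "\<And>z. (norm z)^2 = (u \<bullet> z)^2 + (w \<bullet> z)^2" and ab: "a \<le> b"
  shows "hausdorff1 {x. u \<bullet> x = d \<and> a \<le> w \<bullet> x \<and> w \<bullet> x \<le> b} \<le> ennreal (b - a)"
proof (rule hausdorff1_le)
  show "0 \<le> b - a" using ab by simp
  let ?S = "{x. u \<bullet> x = d \<and> a \<le> w \<bullet> x \<and> w \<bullet> x \<le> b}"
  have bS: "bounded ?S"
    unfolding bounded_iff
  proof (intro exI ballI)
    fix x assume x: "x \<in> ?S"
    have "(norm x)^2 = d^2 + (w \<bullet> x)^2" using orth[of x] x by simp
    also have "\<dots> \<le> (\<bar>d\<bar> + \<bar>w \<bullet> x\<bar>)^2" by (simp add: power2_sum)
    finally have "norm x \<le> \<bar>d\<bar> + \<bar>w \<bullet> x\<bar>" by (rule power2_le_imp_le) simp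
    then show "norm x \<le> \<bar>d\<bar> + \<bar>a\<bar> + \<bar>b\<bar>" using x by auto
  qed
  fix N :: nat assume N: "N > 0"
  have Np: "real N > 0" using N by simp
  define C where "C i = {x \<in> ?S. a + real i * (b - a) / N \<le> w \<bullet> x \<and> w \<bullet> x \<le> a + (real i + 1) * (b - a) / N}" for i
  show "\<exists>C::nat \<Rightarrow> (real^2) set. ?S \<subseteq> (\<Union>i\<in>{..<N}. C i) \<and> (\<forall>i. bounded (C i) \<and> diameter (C i) \<le> (b - a) / real N)"
  proof (intro exI conjI allI)
    show "?S \<subseteq> (\<Union>i\<in>{..<N}. C i)"
    proof
      fix x assume x: "x \<in> ?S"
      obtain i where i: "i < N" "real i * (b - a) / N \<le> w \<bullet> x - a" "w \<bullet> x - a \<le> (real i + 1) * (b - a) / N"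
        using grid[OF N, of "w \<bullet> x - a" "b - a"] x by auto
      then have "x \<in> C i" using x by (simp add: C_def)
      then show "x \<in> (\<Union>i\<in>{..<N}. C i)" using i by blast
    qed
    fix i
    show "bounded (C i)" by (rule bounded_subset[OF bS]) (auto simp: C_def)
    show "diameter (C i) \<le> (b - a) / N"
    proof (rule diameter_le)
      show "C i \<noteq> {} \<or> 0 \<le> (b - a) / N" using ab Np by simp
      fix x y assume xy: "x \<in> C i" "y \<in> C i"
      have len: "a + (real i + 1) * (b - a) / N - (a + real i * (b - a) / N) = (b - a) / N"
        using Np by (simp add: field_simps)
      have "\<bar>w \<bullet> x - w \<bullet> y\<bar> \<le> (b - a) / N" using xy len by (auto simp: C_def abs_le_iff)
      then have h: "(w \<bullet> (x - y))^2 \<le> ((b - a) / N)^2"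
        by (simp add: inner_diff_right abs_le_square_iff[symmetric] ab Np)
      have "(norm (x - y))^2 = (u \<bullet> (x - y))^2 + (w \<bullet> (x - y))^2" by (rule orth)
      also have "u \<bullet> (x - y) = 0" using xy by (simp add: C_def inner_diff_right)
      finally have "(norm (x - y))^2 \<le> ((b - a) / N)^2" using h by simp
      then show "norm (x - y) \<le> (b - a) / N" by (rule power2_le_imp_le) (use ab Np in simp)
    qed
  qed
qed

lemma sets_H1: "sets H1 = sets borel"
  unfolding H1_def by (simp add: sets.sigma_sets_eq[of borel, simplified])

lemma emeasure_H1_le: "emeasure H1 A \<le> hausdorff1 A"
  unfolding H1_def emeasure_measure_of_conv by auto

lemma strip_closed: "closed {x::real^2. u \<bullet> x = d \<and> a \<le> w \<bullet> x \<and> w \<bullet> x \<le> b}"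
proof -
  have "{x::real^2. u \<bullet> x = d \<and> a \<le> w \<bullet> x \<and> w \<bullet> x \<le> b} = {x. u \<bullet> x = d} \<inter> {x. w \<bullet> x \<ge> a} \<inter> {x. w \<bullet> x \<le> b}"
    by auto
  then show ?thesis by (simp add: closed_Int closed_hyperplane closed_halfspace_ge closed_halfspace_le)
qed



lemma e_lb: "2.718 \<le> exp (1::real)"
  using e_approx_32 by (simp add: abs_if split: if_split_asm)

lemma inv_sqrt_le:
  fixes X Q :: real
  assumes "0 < X" "0 \<le> Q" "1 \<le> Q^2 * X"
  shows "1 / sqrt X \<le> Q"
proof -
  have sx: "sqrt X > 0" using assms by simp
  have "1^2 \<le> (Q * sqrt X)^2" using assms by (simp add: power_mult_distrib)
  then have "1 \<le> Q * sqrt X" by (rule power2_le_imp_le) (use assms sx in simp)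
  then show ?thesis using sx by (simp add: divide_le_eq mult.commute)
qed

lemma cos_lb: "1 - x^2/2 \<le> cos (x::real)"
proof -
  have "cos x = cos (2 * (x/2))" by simp
  also have "\<dots> = 1 - 2 * (sin (x/2))^2" by (rule cos_double_sin)
  finally have c: "cos x = 1 - 2 * (sin (x/2))^2" .
  have "\<bar>sin (x/2)\<bar> \<le> \<bar>x/2\<bar>" by (rule abs_sin_x_le_abs_x)
  then have "(sin (x/2))^2 \<le> (x/2)^2" by (metis abs_le_square_iff)
  then show ?thesis using c by (simp add: power_divide)
qed

lemma final_bound:
  fixes n :: nat and r :: real
  assumes n3: "n \<ge> 3" and r: "r > 0"
  shows "(1/(2*pi)) * (2 * real n * (\<Sum>j<(if n = 3 then 8 else 1::nat).
           exp (- ((r * cos (pi/n))^2 + (real j * (r * sin (pi/n) / (if n = 3 then 8 else 1::nat)))^2) / 2)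
           * (r * sin (pi/n) / (if n = 3 then 8 else 1::nat)))) < sqrt (2/pi)"
proof -
  define M :: nat where "M = (if n = 3 then 8 else 1)"
  define cs where "cs = cos (pi/n)"
  define ss where "ss = sin (pi/n)"
  define a where "a j = (cs^2 + ss^2 * (real j)^2 / (real M)^2) / 2" for j :: nat
  have Mp: "real M > 0" by (simp add: M_def)
  have np: "real n > 0" using n3 by simp
  have pin: "pi / n \<le> pi / 3" using n3 by (intro divide_left_mono) auto
  have p0: "0 < pi / n" using np by simp
  have p2: "pi / n < pi / 2" using n3 by (intro divide_strict_left_mono) auto
  have cs0: "cs > 0" unfolding cs_def
    by (rule cos_gt_zero_pi) (use p0 p2 in linarith)+
  have ss0: "ss \<ge> 0" unfolding ss_def
    by (rule sin_ge_zero) (use np in \<open>auto simp: divide_le_eq\<close>)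
  have a0: "\<And>j. a j > 0" using cs0 Mp by (simp add: a_def add_pos_nonneg)
  have trm: "exp (- ((r * cs)^2 + (real j * (r * ss / M))^2) / 2) * (r * ss / M)
              \<le> (ss / M) * (1 / sqrt (2 * exp 1 * a j))" for j
  proof -
    have ex: "- ((r * cs)^2 + (real j * (r * ss / M))^2) / 2 = - (a j * r^2)"
      using Mp by (simp add: a_def power_mult_distrib power_divide field_simps)
    have "exp (- ((r * cs)^2 + (real j * (r * ss / M))^2) / 2) * (r * ss / M)
          = (ss / M) * (r * exp (- (a j * r^2)))" unfolding ex by simp
    also have "\<dots> \<le> (ss / M) * (1 / sqrt (2 * exp 1 * a j))"
      using key_exp[OF a0 less_imp_le[OF r]] ss0 Mp by (intro mult_left_mono) auto
    finally show ?thesis .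
  qed
  define T where "T = (1/(2*pi)) * (2 * real n * (\<Sum>j<M.
           exp (- ((r * cs)^2 + (real j * (r * ss / M))^2) / 2) * (r * ss / M)))"
  have T: "T \<le> (n / pi) * (ss / M) * (\<Sum>j<M. 1 / sqrt (2 * exp 1 * a j))"
  proof -
    have "(\<Sum>j<M. exp (- ((r * cs)^2 + (real j * (r * ss / M))^2) / 2) * (r * ss / M))
          \<le> (\<Sum>j<M. (ss / M) * (1 / sqrt (2 * exp 1 * a j)))"
      by (rule sum_mono) (rule trm)
    then have "T \<le> (1/(2*pi)) * (2 * real n * (\<Sum>j<M. (ss / M) * (1 / sqrt (2 * exp 1 * a j))))"
      unfolding T_def by (intro mult_left_mono) auto
    also have "\<dots> = (1/(2*pi)) * (2 * real n * ((ss / M) * (\<Sum>j<M. 1 / sqrt (2 * exp 1 * a j))))"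
      by (simp only: sum_distrib_left[symmetric])
    also have "\<dots> = (n / pi) * (ss / M) * (\<Sum>j<M. 1 / sqrt (2 * exp 1 * a j))"
      by simp
    finally show ?thesis .
  qed
  have "T < sqrt (2/pi)"
  proof (cases "n = 3")
    case True
    then have M8: "M = 8" by (simp add: M_def)
    have cs3: "cs = 1/2" using True by (simp add: cs_def cos_60)
    have ss3: "ss^2 = 3/4" using True by (simp add: ss_def sin_60 power_divide)
    have ss3': "ss = sqrt 3 / 2" using True by (simp add: ss_def sin_60)
    have aj: "a j = (64 + 3 * (real j)^2) / 512" for j
      using M8 by (simp add: a_def cs3 ss3 power_divide field_simps)
    define Q :: "nat \<Rightarrow> real" where "Q j = (if j = 0 then 3033/2500 else if j = 1 then 11857/10000
       else if j = 2 then 11133/10000 else if j = 3 then 5087/5000 else if j = 4 then 9171/10000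
       else if j = 5 then 1029/1250 else if j = 6 then 37/50 else 3341/5000)" for j
    have Qb: "1 / sqrt (2 * exp 1 * a j) \<le> Q j" if j: "j < 8" for j
    proof -
      have "1 / sqrt (2 * exp 1 * a j) \<le> 1 / sqrt (2 * 2.718 * a j)"
        using a0[of j] e_lb by (intro divide_left_mono real_sqrt_le_mono mult_right_mono) auto
      also have "\<dots> \<le> Q j"
      proof (rule inv_sqrt_le)
        show "0 < 2 * 2.718 * a j" using a0[of j] by simp
        have "j = 0 \<or> j = 1 \<or> j = 2 \<or> j = 3 \<or> j = 4 \<or> j = 5 \<or> j = 6 \<or> j = 7" using j by arith
        then show "0 \<le> Q j" "1 \<le> (Q j)^2 * (2 * 2.718 * a j)"
          by (auto simp: Q_def aj power2_eq_square)
      qed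
      finally show ?thesis .
    qed
    have "(\<Sum>j<M. 1 / sqrt (2 * exp 1 * a j)) \<le> (\<Sum>j<M. Q j)"
      using M8 Qb by (intro sum_mono) auto
    also have "(\<Sum>j<M. Q j) = 76781/10000" by (simp add: M8 eval_nat_numeral Q_def)
    finally have S: "(\<Sum>j<M. 1 / sqrt (2 * exp 1 * a j)) \<le> 76781/10000" .
    have "T \<le> (3 / pi) * (ss / 8) * (\<Sum>j<M. 1 / sqrt (2 * exp 1 * a j))"
      using T True M8 by simp
    also have "\<dots> \<le> (3 / pi) * (ss / 8) * (76781/10000)"
      using S ss0 by (intro mult_left_mono) auto
    also have "\<dots> < sqrt (2/pi)"
    proof (rule real_less_rsqrt)
      have "((3 / pi) * (ss / 8) * (76781/10000))^2 = 27 * (76781/10000)^2 / (256 * pi^2)"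
        by (simp add: power_mult_distrib power_divide ss3)
      also have "\<dots> < 2 / pi"
      proof -
        have "27 * (76781/10000)^2 < (512::real) * 3.141592653588" by (simp add: power2_eq_square)
        also have "\<dots> \<le> 512 * pi" using pi_approx(1) by simp
        finally have "27 * (76781/10000)^2 < 512 * pi" .
        then show ?thesis by (simp add: divide_less_eq power2_eq_square field_simps)
      qed
      finally show "((3 / pi) * (ss / 8) * (76781/10000))^2 < 2 / pi" .
    qed
    finally show ?thesis .
  next
    case False
    then have n4: "n \<ge> 4" using n3 by simp
    have M1: "M = 1" using False by (simp add: M_def)
    have "T \<le> (n / pi) * ss * (1 / sqrt (exp 1 * cs^2))"
      using T by (simp add: M1 a_def)
    also have "\<dots> < sqrt (2/pi)"
    proof (rule real_less_rsqrt)
      have "((n / pi) * ss * (1 / sqrt (exp 1 * cs^2)))^2 = (real n * ss)^2 / (pi^2 * exp 1 * cs^2)"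
        by (simp add: power_mult_distrib power_divide)
      also have "\<dots> < 2 / pi"
      proof -
        have key: "(real n * ss)^2 < 2 * pi * exp 1 * cs^2"
        proof (cases "n = 4")
          case True
          then have "ss = cs" by (simp add: ss_def cs_def sin_45 cos_45)
          moreover have "cs^2 = 1/2" using True by (simp add: cs_def cos_45 power_divide)
          moreover have "8 < 2 * pi * exp 1 * (1/2)"
          proof -
            have "(8::real) < 3.141592653588 * 2.718" by simp
            also have "\<dots> \<le> pi * exp 1" using pi_approx(1) e_lb by (intro mult_mono) auto
            finally show ?thesis by simp
          qed
          ultimately have "(real n * ss)^2 = 16 * (1/2)" "2 * pi * exp 1 * cs^2 = 2 * pi * exp 1 * (1/2)"
            using True by (simp_all add: power_mult_distrib)
          then show ?thesis using \<open>8 < 2 * pi * exp 1 * (1/2)\<close> by linarith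
        next
          case False
          then have n5: "real n \<ge> 5" using n4 by simp
          have "ss \<le> pi / n" unfolding ss_def by (rule sin_x_le_x) (simp)
          then have "real n * ss \<le> pi" using np by (simp add: le_divide_eq mult.commute)
          then have l: "(real n * ss)^2 \<le> pi^2" using ss0 np by (intro power_mono) auto
          have p5: "pi / n \<le> pi / 5" using n5 by (intro divide_left_mono) auto
          have h5: "(pi/n)^2 \<le> (pi/5)^2" using p5 np by (intro power_mono) auto
          have "1 - (pi/5)^2/2 \<le> cs" using h5 cos_lb[of "pi/n"] unfolding cs_def by linarith
          moreover have "(4/5::real) \<le> 1 - (pi/5)^2/2"
          proof -
            have "pi^2 \<le> 3.1415926535899^2" using pi_approx(2) by (intro power_mono) auto
            then show ?thesis by (simp add: power_divide)
          qed
          ultimately have c45: "4/5 \<le> cs" by linarith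
          then have "(4/5)^2 \<le> cs^2" by (intro power_mono) auto
          then have c2: "16/25 \<le> cs^2" by (simp add: power2_eq_square)
          then have "2 * 3.141592653588 * 2.718 * (16/25) \<le> 2 * pi * exp 1 * cs^2"
            using pi_approx(1) e_lb by (intro mult_mono) auto
          moreover have "pi^2 < 2 * 3.141592653588 * 2.718 * (16/25)"
          proof -
            have "pi^2 \<le> 3.1415926535899^2" using pi_approx(2) by (intro power_mono) auto
            moreover have "(3.1415926535899::real)^2 < 2 * 3.141592653588 * 2.718 * (16/25)"
              by (simp add: power2_eq_square)
            ultimately show ?thesis by linarith
          qed
          ultimately show ?thesis using l by linarith
        qed
        have pos: "pi^2 * exp 1 * cs^2 > 0" using cs0 by simp
        have "(real n * ss)^2 / (pi^2 * exp 1 * cs^2) < (2 * pi * exp 1 * cs^2) / (pi^2 * exp 1 * cs^2)"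
          using key pos by (rule divide_strict_right_mono)
        also have "\<dots> = 2 / pi" using cs0 by (simp add: power2_eq_square field_simps)
        finally show ?thesis .
      qed
      finally show "((n / pi) * ss * (1 / sqrt (exp 1 * cs^2)))^2 < 2 / pi" .
    qed
    finally show ?thesis .
  qed
  then show ?thesis by (simp add: T_def M_def cs_def ss_def)
qed



lemma sum_prod_snd:
  fixes f :: "'b \<Rightarrow> real"
  shows "(\<Sum>p\<in>A\<times>B. f (snd p)) = real (card A) * (\<Sum>b\<in>B. f b)"
proof -
  have "(\<Sum>p\<in>A\<times>B. f (snd p)) = (\<Sum>a\<in>A. \<Sum>b\<in>B. f b)"
    using sum.cartesian_product[of "\<lambda>a b. f b" B A] by (simp add: split_def)
  then show ?thesis by simp
qed

lemma sum_prod_fst: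
  fixes f :: "'a \<Rightarrow> real"
  shows "(\<Sum>p\<in>A\<times>B. f (fst p)) = real (card B) * (\<Sum>a\<in>A. f a)"
proof -
  have "(\<Sum>p\<in>A\<times>B. f (fst p)) = (\<Sum>a\<in>A. \<Sum>b\<in>B. f a)"
    using sum.cartesian_product[of "\<lambda>a b. f a" B A] by (simp add: split_def)
  then show ?thesis by (simp add: sum_distrib_right mult.commute)
qed

theorem proposition2p3:
  fixes n :: nat and r \<theta> :: real
  assumes "n \<ge> 3" and "r > 0"
  shows "gaussian_perimeter (regular_polygon n r \<theta>) < ennreal (sqrt (2 / pi))"
proof -
  define M :: nat where "M = (if n = 3 then 8 else 1)"
  define d where "d = r * cos (pi / n)"
  define L where "L = r * sin (pi / n) / M"
  define c where "c j = exp (- (d^2 + (real j * L)^2) / 2)" for j :: nat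
  define W where "W k \<sigma> = (if \<sigma> then tng \<theta> n k else - tng \<theta> n k)" for k \<sigma>
  define S where "S k j \<sigma> = {x. nrm \<theta> n k \<bullet> x = d \<and> real j * L \<le> W k \<sigma> \<bullet> x \<and> W k \<sigma> \<bullet> x \<le> (real j + 1) * L}" for k j \<sigma>
  define I where "I = {0..<int n} \<times> ({..<M} \<times> (UNIV :: bool set))"
  define f where "f p x = ennreal (c (fst (snd p))) * indicator (S (fst p) (fst (snd p)) (snd (snd p))) x" for p x
  define F where "F = frontier (regular_polygon n r \<theta>)"
  have Mp: "M > 0" "real M > 0" by (auto simp: M_def)
  have np: "real n > 0" using assms(1) by simp
  have sn: "sin (pi / n) > 0"
    using assms(1) np by (intro sin_gt_zero) (auto simp: divide_less_eq)
  have L0: "L > 0" using sn Mp assms(2) by (simp add: L_def)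
  have cpos: "c j > 0" for j by (simp add: c_def)
  have fin: "finite I" by (simp add: I_def)
  have orthW: "(norm z)^2 = (nrm \<theta> n k \<bullet> z)^2 + (W k \<sigma> \<bullet> z)^2" for z k \<sigma>
    by (cases \<sigma>) (simp_all add: W_def nrm_def tng_def orth2[of z] orth2'[of z] del: inner_minus_left)
  have Sb: "S k j \<sigma> \<in> sets H1" for k j \<sigma>
    unfolding sets_H1 S_def by (intro borel_closed strip_closed)
  have Sh: "emeasure H1 (S k j \<sigma>) \<le> ennreal L" for k j \<sigma>
  proof -
    have "hausdorff1 (S k j \<sigma>) \<le> ennreal ((real j + 1) * L - real j * L)"
      unfolding S_def by (rule hausdorff1_strip) (use orthW L0 in auto)
    then show ?thesis using emeasure_H1_le[of "S k j \<sigma>"] by (simp add: algebra_simps)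
  qed
  have pw: "ennreal (exp (- (norm x)\<^sup>2 / 2)) * indicator F x \<le> (\<Sum>p\<in>I. f p x)" for x
  proof (cases "x \<in> F")
    case False
    then show ?thesis by simp
  next
    case True
    obtain k where k: "k \<in> {0..<int n}" "nrm \<theta> n k \<bullet> x = d" "\<bar>tng \<theta> n k \<bullet> x\<bar> \<le> r * sin (pi / n)"
      using frontier_chord[OF assms True[unfolded F_def]] d_def by blast
    define t where "t = tng \<theta> n k \<bullet> x"
    define \<sigma> where "\<sigma> = (0 \<le> t)"
    have Wt: "W k \<sigma> \<bullet> x = \<bar>t\<bar>" by (simp add: W_def \<sigma>_def t_def)
    obtain j where j: "j < M" "real j * (r * sin (pi / n)) / M \<le> \<bar>t\<bar>" "\<bar>t\<bar> \<le> (real j + 1) * (r * sin (pi / n)) / M"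
      using grid[OF Mp(1), of "\<bar>t\<bar>" "r * sin (pi / n)"] k(3) t_def by auto
    have jL: "real j * L \<le> \<bar>t\<bar>" "\<bar>t\<bar> \<le> (real j + 1) * L" using j by (simp_all add: L_def)
    have xS: "x \<in> S k j \<sigma>" using k(2) jL Wt by (simp add: S_def)
    have "(norm x)\<^sup>2 = d^2 + t^2" using orthW[of x k True] k(2) by (simp add: W_def t_def)
    moreover have "(real j * L)^2 \<le> t^2"
    proof -
      have "(real j * L)^2 \<le> \<bar>t\<bar>^2" using jL L0 by (intro power_mono) auto
      then show ?thesis by simp
    qed
    ultimately have "- (norm x)\<^sup>2 / 2 \<le> - (d^2 + (real j * L)^2) / 2" by simp
    then have ge: "exp (- (norm x)\<^sup>2 / 2) \<le> c j" unfolding c_def by simp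
    have pI: "(k, j, \<sigma>) \<in> I" using k(1) j(1) by (simp add: I_def)
    have "ennreal (exp (- (norm x)\<^sup>2 / 2)) * indicator F x = ennreal (exp (- (norm x)\<^sup>2 / 2))"
      using True by simp
    also have "\<dots> \<le> f (k, j, \<sigma>) x" using ge xS by (simp add: f_def ennreal_leI)
    also have "\<dots> \<le> (\<Sum>p\<in>I. f p x)" by (rule member_le_sum[OF pI _ fin]) simp
    finally show ?thesis .
  qed
  have int_le: "(\<integral>\<^sup>+ x \<in> F. ennreal (exp (- (norm x)\<^sup>2 / 2)) \<partial>H1) \<le> ennreal (\<Sum>p\<in>I. c (fst (snd p)) * L)"
  proof -
    have "(\<integral>\<^sup>+ x \<in> F. ennreal (exp (- (norm x)\<^sup>2 / 2)) \<partial>H1) \<le> (\<integral>\<^sup>+ x. (\<Sum>p\<in>I. f p x) \<partial>H1)"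
      by (rule nn_integral_mono) (rule pw)
    also have "\<dots> = (\<Sum>p\<in>I. \<integral>\<^sup>+ x. f p x \<partial>H1)"
    proof (rule nn_integral_sum)
      fix p assume "p \<in> I"
      have "S (fst p) (fst (snd p)) (snd (snd p)) \<in> sets H1" by (rule Sb)
      then show "f p \<in> borel_measurable H1" unfolding f_def by simp
    qed
    also have "\<dots> = (\<Sum>p\<in>I. ennreal (c (fst (snd p))) * emeasure H1 (S (fst p) (fst (snd p)) (snd (snd p))))"
      unfolding f_def using Sb by (simp add: nn_integral_cmult_indicator)
    also have "\<dots> \<le> (\<Sum>p\<in>I. ennreal (c (fst (snd p))) * ennreal L)"
      by (intro sum_mono mult_left_mono Sh) simp
    also have "\<dots> = (\<Sum>p\<in>I. ennreal (c (fst (snd p)) * L))"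
      by (intro sum.cong refl) (simp add: ennreal_mult cpos L0 less_imp_le)
    also have "\<dots> = ennreal (\<Sum>p\<in>I. c (fst (snd p)) * L)"
      by (rule sum_ennreal) (simp add: cpos L0 less_imp_le)
    finally show ?thesis .
  qed
  have sumI: "(\<Sum>p\<in>I. c (fst (snd p)) * L) = 2 * real n * (\<Sum>j<M. c j * L)"
  proof -
    have "(\<Sum>p\<in>I. c (fst (snd p)) * L) = real n * (\<Sum>q\<in>{..<M} \<times> (UNIV::bool set). c (fst q) * L)"
      unfolding I_def using sum_prod_snd[of "\<lambda>q. c (fst q) * L" "{0..<int n}" "{..<M} \<times> (UNIV::bool set)"]
      by simp
    also have "(\<Sum>q\<in>{..<M} \<times> (UNIV::bool set). c (fst q) * L) = 2 * (\<Sum>j<M. c j * L)"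
      using sum_prod_fst[of "\<lambda>j. c j * L" "{..<M}" "UNIV::bool set"] by simp
    finally show ?thesis by simp
  qed
  have fb: "(1/(2*pi)) * (2 * real n * (\<Sum>j<M. c j * L)) < sqrt (2/pi)"
    using final_bound[OF assms] unfolding c_def d_def L_def M_def .
  have "gaussian_perimeter (regular_polygon n r \<theta>)
        \<le> ennreal (1 / (2 * pi)) * ennreal (2 * real n * (\<Sum>j<M. c j * L))"
    unfolding gaussian_perimeter_def F_def[symmetric] using int_le sumI by (intro mult_left_mono) auto
  also have "\<dots> = ennreal ((1 / (2 * pi)) * (2 * real n * (\<Sum>j<M. c j * L)))"
    by (rule ennreal_mult[symmetric]) (auto simp: cpos L0 less_imp_le intro!: mult_nonneg_nonneg sum_nonneg)
  also have "\<dots> < ennreal (sqrt (2 / pi))"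
    using fb by (subst ennreal_less_iff) (auto simp: cpos L0 less_imp_le intro!: divide_nonneg_nonneg mult_nonneg_nonneg sum_nonneg)
  finally show ?thesis .
qed

end
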